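(* Let $n>3$ be a real number. The fourth-order algebraic differential equation $$y''''\,(y')^2-3\,y'''\,y''\,y'+2\left(1-n^{-2}\right)(y'')^3=0 \qquad \text{(B)}$$ is universal: for every continuous function $\phi:\mathbb R\to\mathbb R$ and every positive continuous function $\epsilon:\mathbb R\to(0,\infty)$ there exists a function $y:\mathbb R\to\mathbb R$ of class $C^4$ which satisfies (B) at every point of $\mathbb R$ and such that $$|y(t)-\phi(t)|<\epsilon(t)\qquad\text{for all } t\in\mathbb R.$$
   Context: A polynomial ordinary differential equation $P(y,y',\dots,y^{(k)})=0$ is called universal if for every continuous $\phi:\mathbb R\to\mathbb R$ and every positive continuous $\epsilon:\mathbb R\to(0,\infty)$ it has a solution $y$, defined and sufficiently differentiable on all of $\mathbb R$ (here: $C^4$, so that the equation holds pointwise), with $|y(t)-\phi(t)|<\epsilon(t)$ for all real $t$. *)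

theory Defs
  imports "HOL-Analysis.Analysis"
begin

definition C_k_on_R :: "nat \<Rightarrow> (real \<Rightarrow> real) \<Rightarrow> bool" where
  "C_k_on_R k y \<longleftrightarrow>
     (\<forall>j<k. \<forall>t. ((deriv ^^ j) y) differentiable (at t)) \<and>
     continuous_on UNIV ((deriv ^^ k) y)"

end

theory Submission
  imports Defs
begin


definition pp :: "real \<Rightarrow> real \<Rightarrow> real" where "pp m x = (max x 0) powr m"

lemma pp_nonneg: "pp m x \<ge> 0" by (simp add: pp_def)

lemma pp_nonpos: "x \<le> 0 \<Longrightarrow> pp m x = 0" by (simp add: pp_def)

lemma pp_pos: "x > 0 \<Longrightarrow> pp m x = x powr m" by (simp add: pp_def)

lemma pp_cont: assumes "m > 0" shows "isCont (pp m) x"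
proof -
  have "continuous_on UNIV (\<lambda>x. (max x 0) powr m)"
    using assms by (intro continuous_on_powr') (auto intro!: continuous_intros)
  then show ?thesis unfolding pp_def[abs_def] by (simp add: continuous_on_eq_continuous_at)
qed

lemma pp_deriv: assumes "m > 1" shows "(pp m has_real_derivative m * pp (m-1) x) (at x)"
proof (cases "x > 0")
  case True
  have "((\<lambda>z. z powr m) has_real_derivative m * x powr (m-1)) (at x)"
    using True by (rule has_real_derivative_powr)
  then have "(pp m has_real_derivative m * x powr (m-1)) (at x)"
    by (rule has_field_derivative_transform_within_open[where S="{0<..}"])
       (use True in \<open>auto simp: pp_pos\<close>)
  then show ?thesis using True by (simp add: pp_pos)
next
  case False
  show ?thesis
  proof (cases "x < 0")
    case True
    have "((\<lambda>z. 0) has_real_derivative 0) (at x)" by simp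
    then have "(pp m has_real_derivative 0) (at x)"
      by (rule has_field_derivative_transform_within_open[where S="{..<0}"])
       (use True in \<open>auto simp: pp_nonpos\<close>)
    then show ?thesis using True by (simp add: pp_nonpos)
  next
    case False
    with \<open>\<not> x > 0\<close> have x0: "x = 0" by simp
    have eq: "(pp m y - pp m 0) / (y - 0) = pp (m-1) y" if "y \<noteq> 0" for y
    proof (cases "y > 0")
      case True
      then show ?thesis by (simp add: pp_pos powr_diff pp_nonpos)
    next
      case False
      then show ?thesis by (simp add: pp_nonpos)
    qed
    have "(pp (m-1) \<longlongrightarrow> pp (m-1) 0) (at 0)"
      using pp_cont[of "m-1" 0] assms by (simp add: isCont_def)
    then have "((\<lambda>y. (pp m y - pp m 0) / (y - 0)) \<longlongrightarrow> 0) (at 0)"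
      by (subst LIM_cong[OF refl eq refl]) (auto simp: pp_nonpos)
    then show ?thesis unfolding x0 has_field_derivative_iff by (simp add: pp_nonpos)
  qed
qed



definition ff :: "real \<Rightarrow> real" where "ff x = 1 / sqrt (1 + (sin x)^2)"
definition TT :: "real \<Rightarrow> real" where "TT x = integral {-3..x} ff"
definition PH :: "real \<Rightarrow> real" where "PH t = inv_into {-2..5} TT t"

lemma ff_pos: "ff x > 0"
  unfolding ff_def by (simp add: add_pos_nonneg)

lemma ff_cont: "continuous_on S ff"
proof -
  have "\<forall>x\<in>S. 1 + (sin x)^2 \<noteq> 0" by (smt (verit) zero_le_power2)
  then show ?thesis unfolding ff_def by (intro continuous_intros) auto
qed

lemma TT_deriv: assumes "-3 < x" shows "(TT has_real_derivative ff x) (at x)"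
proof -
  have "((\<lambda>u. integral {-3..u} ff) has_vector_derivative ff x) (at x within {-3..x+1})"
    using assms by (intro integral_has_vector_derivative ff_cont) auto
  then have "((\<lambda>u. integral {-3..u} ff) has_vector_derivative ff x) (at x)"
    using at_within_Icc_at[of "-3" x "x+1"] assms by simp
  then show ?thesis unfolding TT_def[abs_def] has_real_derivative_iff_has_vector_derivative .
qed

lemma TT_isCont: "-3 < x \<Longrightarrow> isCont TT x"
  using TT_deriv DERIV_isCont by blast

lemma TT_less: assumes "-3 < a" "a < b" shows "TT a < TT b"
proof (rule DERIV_pos_imp_increasing_open[OF assms(2)])
  fix x assume "a < x" "x < b"
  then show "\<exists>y. DERIV TT x :> y \<and> 0 < y" using assms TT_deriv ff_pos by (meson less_trans)
next
  show "continuous_on {a..b} TT" using assms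
    by (intro continuous_at_imp_continuous_on ballI TT_isCont) auto
qed

lemma TT_mono_iff: "-3 < a \<Longrightarrow> -3 < b \<Longrightarrow> TT a < TT b \<longleftrightarrow> a < b"
  by (metis TT_less linorder_neqE_linordered_idom order_less_asym)

lemma TT_le_iff: "-3 < a \<Longrightarrow> -3 < b \<Longrightarrow> TT a \<le> TT b \<longleftrightarrow> a \<le> b"
  by (meson TT_mono_iff not_less)

lemma TT_inj: "inj_on TT {-2..5}"
proof (rule inj_onI)
  fix x y assume "x \<in> {-2..5}" "y \<in> {-2..5}" "TT x = TT y"
  then show "x = y" using TT_mono_iff[of x y] TT_mono_iff[of y x] by auto
qed

lemma PH_TT: "x \<in> {-2..5} \<Longrightarrow> PH (TT x) = x"
  unfolding PH_def using TT_inj by simp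

lemma TT_PH: assumes "TT (-2) \<le> t" "t \<le> TT 5" shows "TT (PH t) = t" "PH t \<in> {-2..5}"
proof -
  have "continuous_on {-2..5} TT"
    by (intro continuous_at_imp_continuous_on ballI TT_isCont) auto
  then obtain x where x: "-2 \<le> x" "x \<le> 5" "TT x = t"
    using IVT'[of TT "-2" t 5] assms by auto
  then show "TT (PH t) = t" "PH t \<in> {-2..5}" using PH_TT[of x] by auto
qed

definition WW where "WW = {TT (-2) <..< TT 5}"

lemma PH_range: assumes "t \<in> WW" shows "-2 < PH t" "PH t < 5"
proof -
  have t: "TT (-2) \<le> t" "t \<le> TT 5" using assms by (auto simp: WW_def)
  note h = TT_PH[OF t]
  show "-2 < PH t"
  proof (rule ccontr)
    assume "\<not> -2 < PH t" then have "PH t = -2" using h by auto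
    then show False using h assms by (auto simp: WW_def)
  qed
  show "PH t < 5"
  proof (rule ccontr)
    assume "\<not> PH t < 5" then have "PH t = 5" using h by auto
    then show False using h assms by (auto simp: WW_def)
  qed
qed

lemma PH_deriv: assumes "t \<in> WW"
  shows "(PH has_real_derivative sqrt (1 + (sin (PH t))^2)) (at t)"
proof -
  have t: "TT (-2) < t" "t < TT 5" using assms by (auto simp: WW_def)
  have r: "-2 < PH t" "PH t < 5" using PH_range[OF assms] by auto
  have "isCont PH (TT (PH t))"
    by (rule isCont_inverse_function2[of "-2" "PH t" 5]) (use r in \<open>auto intro: PH_TT TT_isCont\<close>)
  then have c: "isCont PH t" using TT_PH[of t] t by simp
  have "(PH has_real_derivative inverse (ff (PH t))) (at t)"
    by (rule DERIV_inverse_function[where f=TT and g=PH and x=t and a="TT (-2)" and b="TT 5"])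
       (use t r c ff_pos[of "PH t"] in \<open>auto intro!: TT_deriv TT_PH\<close>)
  then show ?thesis by (simp add: ff_def)
qed



definition gg where "gg t = sin (PH t)"
definition GG where "GG t = cos (PH t) * sqrt (1 + (sin (PH t))^2)"

lemma gg_deriv: "t \<in> WW \<Longrightarrow> (gg has_real_derivative GG t) (at t)"
  unfolding gg_def[abs_def] GG_def
  by (rule derivative_eq_intros PH_deriv refl | assumption)+

lemma GG_deriv: assumes "t \<in> WW" shows "(GG has_real_derivative -2 * (gg t)^3) (at t)"
proof -
  have pos: "1 + (sin (PH t))^2 > 0" by (simp add: add_pos_nonneg)
  have sq: "(sqrt (1 + (sin (PH t))^2))^2 = 1 + (sin (PH t))^2" using pos by simp
  define q where "q = sqrt (1 + (sin (PH t))^2)"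
  have qpos: "q > 0" using pos q_def by simp
  have H: "((\<lambda>t. 1 + (sin (PH t))^2) has_real_derivative 2 * sin (PH t) * (cos (PH t) * q)) (at t)"
    unfolding q_def by (rule derivative_eq_intros PH_deriv[OF assms] refl)+ simp
  have H2: "((\<lambda>t. sqrt (1 + (sin (PH t))^2)) has_real_derivative
      inverse (sqrt (1 + (sin (PH t))^2)) / 2 * (2 * sin (PH t) * (cos (PH t) * q))) (at t)"
    by (rule DERIV_chain2[OF DERIV_real_sqrt[OF pos] H])
  have Hc: "((\<lambda>t. cos (PH t)) has_real_derivative (- sin (PH t) * q)) (at t)"
    by (rule derivative_eq_intros PH_deriv[OF assms] refl)+ (simp add: q_def)
  have H3: "(GG has_real_derivative (- sin (PH t) * q) * q + cos (PH t) * (inverse q / 2 * (2 * sin (PH t) * (cos (PH t) * q)))) (at t)"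
    using DERIV_mult'[OF Hc H2] unfolding GG_def[abs_def] q_def[symmetric] by (simp add: algebra_simps)
  have e: "(- sin (PH t) * q) * q + cos (PH t) * (inverse q / 2 * (2 * sin (PH t) * (cos (PH t) * q))) = -2 * (gg t)^3"
  proof -
    have a: "inverse q / 2 * (2 * sin (PH t) * (cos (PH t) * q)) = sin (PH t) * cos (PH t)"
      using qpos by (simp add: field_simps)
    have b: "q * q = 1 + sin (PH t) * sin (PH t)" using sq q_def by (simp add: power2_eq_square)
    have c: "cos (PH t) * cos (PH t) = 1 - sin (PH t) * sin (PH t)"
      using sin_cos_squared_add3[of "PH t"] by linarith
    have "(- sin (PH t) * q) * q + cos (PH t) * (inverse q / 2 * (2 * sin (PH t) * (cos (PH t) * q)))
       = - sin (PH t) * (q * q) + (cos (PH t) * cos (PH t)) * sin (PH t)"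
      unfolding a by (simp add: algebra_simps)
    also have "\<dots> = -2 * (sin (PH t))^3" unfolding b c by (simp add: algebra_simps power3_eq_cube)
    finally show ?thesis by (simp add: gg_def)
  qed
  show ?thesis using H3 e by simp
qed

lemma pp_chain[derivative_intros]:
  "m > 1 \<Longrightarrow> (g has_real_derivative D) (at x) \<Longrightarrow> E = m * pp (m-1) (g x) * D
   \<Longrightarrow> ((\<lambda>x. pp m (g x)) has_real_derivative E) (at x)"
  using DERIV_chain2[OF pp_deriv] by blast



definition F1 where "F1 n t = pp n (gg t)"
definition F2 where "F2 n t = n * pp (n-1) (gg t) * GG t"
definition F3 where "F3 n t = n*(n-1) * pp (n-2) (gg t) * (GG t)^2 - 2*n * pp (n-1) (gg t) * (gg t)^3"
definition F4 where "F4 n t = n*(n-1)*(n-2) * pp (n-3) (gg t) * (GG t)^3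
   - 6*n*(n-1) * pp (n-2) (gg t) * (gg t)^3 * GG t - 6*n * pp (n-1) (gg t) * (gg t)^2 * GG t"

lemma F1_deriv: "n > 3 \<Longrightarrow> t \<in> WW \<Longrightarrow> (F1 n has_real_derivative F2 n t) (at t)"
  unfolding F1_def[abs_def] F2_def
  by (rule derivative_eq_intros gg_deriv refl | assumption | simp)+

lemma F2_deriv: "n > 3 \<Longrightarrow> t \<in> WW \<Longrightarrow> (F2 n has_real_derivative F3 n t) (at t)"
  unfolding F2_def[abs_def] F3_def
  apply (rule derivative_eq_intros gg_deriv GG_deriv refl | assumption | simp)+
  by (simp add: algebra_simps power2_eq_square power3_eq_cube)

lemma F3_deriv: "n > 3 \<Longrightarrow> t \<in> WW \<Longrightarrow> (F3 n has_real_derivative F4 n t) (at t)"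
  unfolding F3_def[abs_def] F4_def
  apply (rule derivative_eq_intros gg_deriv GG_deriv refl | assumption | simp)+
  by (simp add: algebra_simps power2_eq_square power3_eq_cube)



lemma pp_cont_comp: "m > 0 \<Longrightarrow> isCont g t \<Longrightarrow> isCont (\<lambda>t. pp m (g t)) t"
  by (rule isCont_o2[OF _ pp_cont])

lemma F4_cont: assumes "n > 3" "t \<in> WW" shows "isCont (F4 n) t"
proof -
  have c1: "isCont gg t" using gg_deriv[OF assms(2)] DERIV_isCont by blast
  have c2: "isCont GG t" using GG_deriv[OF assms(2)] DERIV_isCont by blast
  show ?thesis unfolding F4_def[abs_def]
    using assms by (intro continuous_intros pp_cont_comp c1 c2) auto
qed

lemma ode_alg:
  fixes n x G :: real assumes n: "n > 3"
  shows "F4 n t * (F1 n t)^2 - 3 * F3 n t * F2 n t * F1 n t + 2 * (1 - 1/n^2) * (F2 n t)^3 = 0"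
proof (cases "gg t > 0")
  case False
  then show ?thesis by (simp add: F1_def F2_def F3_def F4_def pp_nonpos)
next
  case True
  define x where "x = gg t"
  define P where "P = x powr (n-3)"
  define G where "G = GG t"
  have x: "x > 0" using True x_def by simp
  have sh: "x powr (n-3 + real k) = P * x^k" for k
    unfolding P_def using x by (simp add: powr_add powr_realpow)
  have e2: "pp (n-2) x = P * x" using sh[of 1] x by (simp add: pp_pos)
  have e1: "pp (n-1) x = P * x^2" using sh[of 2] x by (simp add: pp_pos)
  have e0: "pp n x = P * x^3" using sh[of 3] x by (simp add: pp_pos)
  have e3: "pp (n-3) x = P" unfolding P_def using x by (simp add: pp_pos)
  have nz: "n \<noteq> 0" using n by simp
  show ?thesis
    unfolding F1_def F2_def F3_def F4_def x_def[symmetric] G_def[symmetric] e0 e1 e2 e3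
    using nz by (simp add: field_simps) algebra
qed



lemma WW_open: "open WW" unfolding WW_def by simp

lemma gg_nonpos: assumes "t \<in> WW" "t \<le> TT 0 \<or> TT pi \<le> t" shows "gg t \<le> 0"
proof -
  have t: "TT (-2) \<le> t" "t \<le> TT 5" using assms by (auto simp: WW_def)
  have e: "TT (PH t) = t" using TT_PH[OF t] by simp
  have r: "-2 < PH t" "PH t < 5" using PH_range[OF assms(1)] by auto
  have p3: "pi > 3" by (rule pi_gt3)
  from assms(2) show ?thesis
  proof
    assume "t \<le> TT 0"
    then have "PH t \<le> 0" using TT_le_iff[of "PH t" 0] e r by auto
    then show ?thesis using sin_ge_zero[of "- PH t"] r p3 by (simp add: gg_def)
  next
    assume "TT pi \<le> t"
    then have "pi \<le> PH t" using TT_le_iff[of pi "PH t"] e r p3 pi_less_4 by auto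
    then show ?thesis using sin_le_zero[of "PH t"] r p3 pi_less_4 by (simp add: gg_def)
  qed
qed

lemma outside_WW: "t \<notin> WW \<Longrightarrow> t < TT 0 \<or> TT pi < t"
proof -
  assume "t \<notin> WW"
  then have "t \<le> TT (-2) \<or> TT 5 \<le> t" by (auto simp: WW_def)
  moreover have "TT (-2) < TT 0" "TT pi < TT 5" using pi_gt3 pi_less_4 by (auto intro!: TT_less)
  ultimately show ?thesis by auto
qed

lemma zero_near: assumes "t \<notin> WW"
  obtains S where "open S" "t \<in> S" "\<And>x. x \<in> S \<Longrightarrow> x \<in> WW \<Longrightarrow> gg x \<le> 0"
proof (cases "t < TT 0")
  case True
  show ?thesis by (rule that[of "{..<TT 0}"]) (use True gg_nonpos in auto)
next
  case False
  then have "TT pi < t" using outside_WW[OF assms] by auto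
  show ?thesis by (rule that[of "{TT pi<..}"]) (use \<open>TT pi < t\<close> gg_nonpos in auto)
qed

lemma glue_deriv:
  assumes d: "\<And>t. t \<in> WW \<Longrightarrow> (f has_real_derivative f' t) (at t)"
    and z: "\<And>t. t \<in> WW \<Longrightarrow> gg t \<le> 0 \<Longrightarrow> f t = 0 \<and> f' t = 0"
  shows "((\<lambda>t. if t \<in> WW then f t else 0) has_real_derivative (if t \<in> WW then f' t else 0)) (at t)"
proof (cases "t \<in> WW")
  case True
  show ?thesis using has_field_derivative_transform_within_open[OF d[OF True] WW_open True] True by simp
next
  case False
  obtain S where S: "open S" "t \<in> S" "\<And>x. x \<in> S \<Longrightarrow> x \<in> WW \<Longrightarrow> gg x \<le> 0"
    using zero_near[OF False] by blast
  have "((\<lambda>t. 0) has_real_derivative 0) (at t)" by simp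
  then have "((\<lambda>t. if t \<in> WW then f t else 0) has_real_derivative 0) (at t)"
    by (rule has_field_derivative_transform_within_open[OF _ S(1,2)]) (use S(3) z in auto)
  then show ?thesis using False by simp
qed

lemma glue_cont:
  fixes f :: "real \<Rightarrow> real"
  assumes d: "\<And>t. t \<in> WW \<Longrightarrow> isCont f t"
    and z: "\<And>t. t \<in> WW \<Longrightarrow> gg t \<le> 0 \<Longrightarrow> f t = 0"
  shows "isCont (\<lambda>t. if t \<in> WW then f t else 0) t"
proof (cases "t \<in> WW")
  case True
  have "eventually (\<lambda>x. x \<in> WW) (nhds t)" using WW_open True eventually_nhds by blast
  then have "eventually (\<lambda>x. f x = (if x \<in> WW then f x else 0)) (nhds t)" by (auto elim: eventually_mono)
  then have "isCont f t = isCont (\<lambda>t. if t \<in> WW then f t else 0) t" by (rule isCont_cong)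
  then show ?thesis using d[OF True] by simp
next
  case False
  obtain S where S: "open S" "t \<in> S" "\<And>x. x \<in> S \<Longrightarrow> x \<in> WW \<Longrightarrow> gg x \<le> 0"
    using zero_near[OF False] by blast
  have "eventually (\<lambda>x. x \<in> S) (nhds t)" using S eventually_nhds by blast
  then have "eventually (\<lambda>x. (\<lambda>_. 0::real) x = (if x \<in> WW then f x else 0)) (nhds t)"
    by (auto elim!: eventually_mono simp: S(3) z)
  then show ?thesis using isCont_cong[of "\<lambda>_. 0::real"] by auto
qed

definition U1 where "U1 n t = (if t \<in> WW then F1 n t else 0)"
definition U2 where "U2 n t = (if t \<in> WW then F2 n t else 0)"
definition U3 where "U3 n t = (if t \<in> WW then F3 n t else 0)"
definition U4 where "U4 n t = (if t \<in> WW then F4 n t else 0)"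

lemma U1_deriv: assumes "n > 3" shows "(U1 n has_real_derivative U2 n t) (at t)"
  unfolding U1_def[abs_def] U2_def
  by (rule glue_deriv[OF F1_deriv[OF assms]]) (simp_all add: F1_def F2_def pp_nonpos)
lemma U2_deriv: assumes "n > 3" shows "(U2 n has_real_derivative U3 n t) (at t)"
  unfolding U2_def[abs_def] U3_def
  by (rule glue_deriv[OF F2_deriv[OF assms]]) (simp_all add: F2_def F3_def pp_nonpos)
lemma U3_deriv: assumes "n > 3" shows "(U3 n has_real_derivative U4 n t) (at t)"
  unfolding U3_def[abs_def] U4_def
  by (rule glue_deriv[OF F3_deriv[OF assms]]) (simp_all add: F3_def F4_def pp_nonpos)
lemma U4_cont: assumes "n > 3" shows "isCont (U4 n) t"
  unfolding U4_def[abs_def]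
  by (rule glue_cont[OF F4_cont[OF assms]]) (simp_all add: F4_def pp_nonpos)

lemma U_ode: "n > 3 \<Longrightarrow> U4 n t * (U1 n t)^2 - 3 * U3 n t * U2 n t * U1 n t + 2 * (1 - 1/n^2) * (U2 n t)^3 = 0"
  unfolding U1_def U2_def U3_def U4_def using ode_alg by auto

lemma U1_nonneg: "U1 n t \<ge> 0" by (simp add: U1_def F1_def pp_nonneg)

lemma U1_zero: "t \<le> TT 0 \<or> TT pi \<le> t \<Longrightarrow> U1 n t = 0"
  unfolding U1_def F1_def using gg_nonpos by (auto simp: pp_nonpos)

lemma U1_pos: "TT 0 < t \<Longrightarrow> t < TT pi \<Longrightarrow> U1 n t > 0"
proof -
  assume a: "TT 0 < t" "t < TT pi"
  have p3: "pi > 3" by (rule pi_gt3)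
  have "TT (-2) < TT 0" "TT pi < TT 5" using p3 pi_less_4 by (auto intro!: TT_less)
  then have w: "t \<in> WW" using a by (auto simp: WW_def)
  have t: "TT (-2) \<le> t" "t \<le> TT 5" using w by (auto simp: WW_def)
  have e: "TT (PH t) = t" using TT_PH[OF t] by simp
  have r: "-2 < PH t" "PH t < 5" using PH_range[OF w] by auto
  have "0 < PH t" "PH t < pi" using TT_mono_iff[of 0 "PH t"] TT_mono_iff[of "PH t" pi] e r a p3 by auto
  then have "gg t > 0" unfolding gg_def by (rule sin_gt_zero)
  then show ?thesis using w by (simp add: U1_def F1_def pp_pos)
qed



definition al where "al = TT 0"
definition be where "be = TT pi"

lemma al_be: "al < be" unfolding al_def be_def using pi_gt3 by (intro TT_less) auto

definition V where "V n t = integral {al - 1..t} (U1 n)"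

lemma U1_cont: "n > 3 \<Longrightarrow> continuous_on S (U1 n)"
  by (intro continuous_at_imp_continuous_on ballI DERIV_isCont[OF U1_deriv])

lemma V_zero: "t \<le> al \<Longrightarrow> V n t = 0"
proof -
  assume t: "t \<le> al"
  have "integral {al - 1..t} (U1 n) = integral {al - 1..t} (\<lambda>_. 0)"
    by (rule integral_cong) (use t in \<open>auto simp: al_def intro!: U1_zero\<close>)
  then show ?thesis by (simp add: V_def)
qed

lemma V_deriv: assumes n: "n > 3" shows "(V n has_real_derivative U1 n t) (at t)"
proof (cases "t < al")
  case True
  have "((\<lambda>t. 0) has_real_derivative 0) (at t)" by simp
  then have "(V n has_real_derivative 0) (at t)"
    by (rule has_field_derivative_transform_within_open[where S="{..<al}"]) (use True V_zero in auto)
  then show ?thesis using True U1_zero[of t n] by (simp add: al_def)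
next
  case False
  have "((\<lambda>u. integral {al - 1..u} (U1 n)) has_vector_derivative U1 n t) (at t within {al-1..t+1})"
    using False by (intro integral_has_vector_derivative U1_cont n) auto
  then have "((\<lambda>u. integral {al - 1..u} (U1 n)) has_vector_derivative U1 n t) (at t)"
    using at_within_Icc_at[of "al - 1" t "t+1"] False by simp
  then show ?thesis unfolding V_def[abs_def] has_real_derivative_iff_has_vector_derivative .
qed

lemma V_cont: "n > 3 \<Longrightarrow> continuous_on S (V n)"
  by (intro continuous_at_imp_continuous_on ballI DERIV_isCont[OF V_deriv])

lemma V_mono: assumes "n > 3" "a \<le> b" shows "V n a \<le> V n b"
  by (rule DERIV_nonneg_imp_nondecreasing[OF assms(2)]) (use V_deriv[OF assms(1)] U1_nonneg in blast)

lemma V_const: assumes n: "n > 3" and t: "be \<le> t" shows "V n t = V n be"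
proof -
  have i: "U1 n integrable_on {al - 1..t}" by (intro integrable_continuous_interval U1_cont n)
  have "integral {al - 1..be} (U1 n) + integral {be..t} (U1 n) = integral {al - 1..t} (U1 n)"
    by (rule Henstock_Kurzweil_Integration.integral_combine[OF _ t i]) (use al_be in auto)
  moreover have "integral {be..t} (U1 n) = integral {be..t} (\<lambda>_. 0)"
    by (rule integral_cong) (auto simp: be_def intro!: U1_zero)
  ultimately show ?thesis by (simp add: V_def)
qed

lemma V_pos: assumes n: "n > 3" shows "V n be > 0"
proof -
  have "V n al < V n be"
  proof (rule DERIV_pos_imp_increasing_open[OF al_be])
    fix x assume "al < x" "x < be"
    then show "\<exists>y. DERIV (V n) x :> y \<and> 0 < y"
      using V_deriv[OF n] U1_pos[of x n] by (auto simp: al_def be_def)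
  qed (rule V_cont[OF n])
  then show ?thesis using V_zero[of al n] by simp
qed



lemma affine_chain:
  assumes "\<And>\<sigma>. (f has_real_derivative f' \<sigma>) (at \<sigma>)"
  shows "((\<lambda>x. f (C*x+E)) has_real_derivative f' (C*x+E) * C) (at x)"
  by (rule DERIV_chain2[OF assms]) (auto intro!: derivative_eq_intros)

lemma rep_derivs:
  fixes S :: "nat \<Rightarrow> real \<Rightarrow> real" and y :: "real \<Rightarrow> real"
  assumes D: "\<And>k \<sigma>. k < 4 \<Longrightarrow> (S k has_real_derivative S (Suc k) \<sigma>) (at \<sigma>)"
    and Q: "open Q" and eq: "\<And>x. x \<in> Q \<Longrightarrow> y x = A + B * S 0 (C*x + E)"
  shows "k \<le> 4 \<Longrightarrow> x \<in> Q \<Longrightarrow> (deriv^^k) y x = (if k = 0 then A else 0) + B * C^k * S k (C*x+E)"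
proof (induction k arbitrary: x)
  case 0
  then show ?case using eq by simp
next
  case (Suc k)
  have IH: "\<And>z. z \<in> Q \<Longrightarrow> (\<lambda>z. (if k = 0 then A else 0) + B * C^k * S k (C*z+E)) z = (deriv^^k) y z"
    using Suc by simp
  have "((\<lambda>z. (if k = 0 then A else 0) + B * C^k * S k (C*z+E)) has_real_derivative
          B * C^k * (S (Suc k) (C*x+E) * C)) (at x)"
  proof -
    have Dk: "\<And>\<sigma>. (S k has_real_derivative S (Suc k) \<sigma>) (at \<sigma>)" using D Suc.prems by auto
    have "((\<lambda>z. (if k = 0 then A else 0) + B * C^k * S k (C*z+E)) has_real_derivative 0 + B * C^k * (S (Suc k) (C*x+E) * C)) (at x)"
      by (rule DERIV_add[OF DERIV_const DERIV_cmult[OF affine_chain[OF Dk]]])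
    then show ?thesis by simp
  qed
  then have "((deriv^^k) y has_real_derivative B * C^k * (S (Suc k) (C*x+E) * C)) (at x)"
    by (rule has_field_derivative_transform_within_open[OF _ Q Suc.prems(2) IH])
  then have "deriv ((deriv^^k) y) x = B * C^k * (S (Suc k) (C*x+E) * C)"
    by (rule DERIV_imp_deriv)
  then show ?case by (simp add: algebra_simps)
qed

lemma assemble:
  fixes S :: "nat \<Rightarrow> real \<Rightarrow> real" and y :: "real \<Rightarrow> real" and c :: real
  assumes D: "\<And>k \<sigma>. k < 4 \<Longrightarrow> (S k has_real_derivative S (Suc k) \<sigma>) (at \<sigma>)"
    and cont: "\<And>\<sigma>. isCont (S 4) \<sigma>"
    and ode: "\<And>\<sigma>. S 4 \<sigma> * (S 1 \<sigma>)^2 - 3 * S 3 \<sigma> * S 2 \<sigma> * S 1 \<sigma> + 2 * c * (S 2 \<sigma>)^3 = 0"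
    and rep: "\<And>t. \<exists>Q A B C E. open Q \<and> t \<in> Q \<and> (\<forall>x\<in>Q. y x = A + B * S 0 (C*x + E))"
  shows "C_k_on_R 4 y \<and> (\<forall>t. (deriv ^^ 4) y t * ((deriv ^^ 1) y t)^2
                 - 3 * (deriv ^^ 3) y t * (deriv ^^ 2) y t * (deriv ^^ 1) y t
                 + 2 * c * ((deriv ^^ 2) y t)^3 = 0)"
proof -
  have loc: "\<exists>Q A B C E. open Q \<and> t \<in> Q \<and> (\<forall>k\<le>4. \<forall>x\<in>Q. (deriv^^k) y x = (if k = 0 then A else 0) + B * C^k * S k (C*x+E))" for t
  proof -
    obtain Q A B C E where h: "open Q" "t \<in> Q" "\<forall>x\<in>Q. y x = A + B * S 0 (C*x + E)" using rep[of t] by blast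
    show ?thesis using rep_derivs[where S=S and Q=Q and y=y and A=A and B=B and C=C and E=E, OF D h(1)] h by blast
  qed
  have diff: "((deriv^^j) y) differentiable (at t)" if "j < 4" for j t
  proof -
    obtain Q A B C E where h: "open Q" "t \<in> Q" "\<forall>k\<le>4. \<forall>x\<in>Q. (deriv^^k) y x = (if k = 0 then A else 0) + B * C^k * S k (C*x+E)"
      using loc[of t] by blast
    have "((\<lambda>z. (if j = 0 then A else 0) + B * C^j * S j (C*z+E)) has_real_derivative
          B * C^j * (S (Suc j) (C*t+E) * C)) (at t)"
    proof -
      have Dk: "\<And>\<sigma>. (S j has_real_derivative S (Suc j) \<sigma>) (at \<sigma>)" using D that by auto
      have "((\<lambda>z. (if j = 0 then A else 0) + B * C^j * S j (C*z+E)) has_real_derivative 0 + B * C^j * (S (Suc j) (C*t+E) * C)) (at t)"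
      by (rule DERIV_add[OF DERIV_const DERIV_cmult[OF affine_chain[OF Dk]]])
    then show ?thesis by simp
    qed
    then have "((deriv^^j) y has_real_derivative B * C^j * (S (Suc j) (C*t+E) * C)) (at t)"
      by (rule has_field_derivative_transform_within_open[OF _ h(1,2)]) (use h(3) that in auto)
    then show ?thesis using real_differentiable_def by blast
  qed
  have ct: "isCont ((deriv^^4) y) t" for t
  proof -
    obtain Q A B C E where h: "open Q" "t \<in> Q" "\<forall>k\<le>4. \<forall>x\<in>Q. (deriv^^k) y x = (if k = 0 then A else 0) + B * C^k * S k (C*x+E)"
      using loc[of t] by blast
    have "eventually (\<lambda>x. x \<in> Q) (nhds t)" using h eventually_nhds by blast
    then have "eventually (\<lambda>x. (\<lambda>z. B * C^4 * S 4 (C*z+E)) x = (deriv^^4) y x) (nhds t)"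
      by (auto elim!: eventually_mono simp: h(3))
    then have e: "isCont (\<lambda>z. B * C^4 * S 4 (C*z+E)) t = isCont ((deriv^^4) y) t" by (rule isCont_cong)
    have "isCont (\<lambda>z. B * C^4 * S 4 (C*z+E)) t"
      by (intro continuous_intros isCont_o2[OF _ cont])
    then show ?thesis using e by simp
  qed
  have ck: "C_k_on_R 4 y" unfolding C_k_on_R_def
    using diff ct by (auto intro: continuous_at_imp_continuous_on)
  have "(deriv ^^ 4) y t * ((deriv ^^ 1) y t)^2
                 - 3 * (deriv ^^ 3) y t * (deriv ^^ 2) y t * (deriv ^^ 1) y t
                 + 2 * c * ((deriv ^^ 2) y t)^3 = 0" for t
  proof -
    obtain Q A B C E where h: "open Q" "t \<in> Q" "\<forall>k\<le>4. \<forall>x\<in>Q. (deriv^^k) y x = (if k = 0 then A else 0) + B * C^k * S k (C*x+E)"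
      using loc[of t] by blast
    have v: "(deriv^^k) y t = B * C^k * S k (C*t+E)" if "1 \<le> k" "k \<le> 4" for k
      using h(2,3) that by auto
    have v1: "(deriv^^1) y t = B * C^1 * S 1 (C*t+E)" by (rule v) auto
    have v2: "(deriv^^2) y t = B * C^2 * S 2 (C*t+E)" by (rule v) auto
    have v3: "(deriv^^3) y t = B * C^3 * S 3 (C*t+E)" by (rule v) auto
    have v4: "(deriv^^4) y t = B * C^4 * S 4 (C*t+E)" by (rule v) auto
    define z where "z = C*t+E"
    have "(deriv ^^ 4) y t * ((deriv ^^ 1) y t)^2
                 - 3 * (deriv ^^ 3) y t * (deriv ^^ 2) y t * (deriv ^^ 1) y t
                 + 2 * c * ((deriv ^^ 2) y t)^3
        = B^3 * C^6 * (S 4 z * (S 1 z)^2 - 3 * S 3 z * S 2 z * S 1 z + 2 * c * (S 2 z)^3)"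
      unfolding v1 v2 v3 v4 z_def[symmetric] by algebra
    also have "\<dots> = 0" using ode by simp
    finally show ?thesis .
  qed
  then show ?thesis using ck by blast
qed



definition cc where "cc = 2 * (be - al)"
definition arg where "arg \<sigma> = al + (be - al) * (2 * \<sigma> - 1/2)"
definition UU where "UU n k = (if k = 0 then V n else if k = 1 then U1 n else if k = 2 then U2 n
   else if k = 3 then U3 n else U4 n)"
definition Sd where "Sd n k \<sigma> = cc^k / V n be * UU n k (arg \<sigma>)"

lemma UU_deriv: assumes "n > 3" "k < 4" shows "(UU n k has_real_derivative UU n (Suc k) t) (at t)"
proof -
  have "k = 0 \<or> k = 1 \<or> k = 2 \<or> k = 3" using assms by auto
  then show ?thesis using V_deriv U1_deriv U2_deriv U3_deriv assms(1) unfolding UU_def by auto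
qed

lemma arg_deriv: "(arg has_real_derivative cc) (at \<sigma>)"
  unfolding arg_def[abs_def] cc_def by (auto intro!: derivative_eq_intros)

lemma Sd_deriv: assumes "n > 3" "k < 4" shows "(Sd n k has_real_derivative Sd n (Suc k) \<sigma>) (at \<sigma>)"
proof -
  have "((\<lambda>\<sigma>. UU n k (arg \<sigma>)) has_real_derivative UU n (Suc k) (arg \<sigma>) * cc) (at \<sigma>)"
    by (rule DERIV_chain2[OF UU_deriv[OF assms] arg_deriv])
  then have "((\<lambda>\<sigma>. cc^k / V n be * UU n k (arg \<sigma>)) has_real_derivative cc^k / V n be * (UU n (Suc k) (arg \<sigma>) * cc)) (at \<sigma>)"
    by (rule DERIV_cmult)
  then show ?thesis unfolding Sd_def[abs_def] by (simp add: algebra_simps)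
qed

lemma Sd4_cont: assumes "n > 3" shows "isCont (Sd n 4) \<sigma>"
proof -
  have "isCont arg \<sigma>" using arg_deriv DERIV_isCont by blast
  then have "isCont (\<lambda>\<sigma>. U4 n (arg \<sigma>)) \<sigma>" by (rule isCont_o2[OF _ U4_cont[OF assms]])
  then show ?thesis unfolding Sd_def[abs_def] UU_def by (intro continuous_intros) auto
qed

lemma Sd_ode: assumes "n > 3"
  shows "Sd n 4 \<sigma> * (Sd n 1 \<sigma>)^2 - 3 * Sd n 3 \<sigma> * Sd n 2 \<sigma> * Sd n 1 \<sigma> + 2 * (1 - 1/n^2) * (Sd n 2 \<sigma>)^3 = 0"
proof -
  define K where "K = cc^6 / (V n be)^3"
  define a where "a = arg \<sigma>"
  have "Sd n 4 \<sigma> * (Sd n 1 \<sigma>)^2 - 3 * Sd n 3 \<sigma> * Sd n 2 \<sigma> * Sd n 1 \<sigma> + 2 * (1 - 1/n^2) * (Sd n 2 \<sigma>)^3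
    = K * (U4 n a * (U1 n a)^2 - 3 * U3 n a * U2 n a * U1 n a + 2 * (1 - 1/n^2) * (U2 n a)^3)"
  proof -
    have p: "V n be \<noteq> 0" using V_pos[OF assms] by simp
    have s1: "Sd n 1 \<sigma> = cc / V n be * U1 n a" by (simp add: Sd_def UU_def a_def)
    have s2: "Sd n 2 \<sigma> = cc^2 / V n be * U2 n a" by (simp add: Sd_def UU_def a_def)
    have s3: "Sd n 3 \<sigma> = cc^3 / V n be * U3 n a" by (simp add: Sd_def UU_def a_def)
    have s4: "Sd n 4 \<sigma> = cc^4 / V n be * U4 n a" by (simp add: Sd_def UU_def a_def)
    show ?thesis unfolding s1 s2 s3 s4 K_def using p by (simp add: field_simps) algebra
  qed
  also have "\<dots> = 0" using U_ode[OF assms] by simp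
  finally show ?thesis .
qed

lemma St_low: "\<sigma> \<le> 1/4 \<Longrightarrow> Sd n 0 \<sigma> = 0"
proof -
  assume "\<sigma> \<le> 1/4"
  then have "2 * \<sigma> - 1/2 \<le> 0" by simp
  then have "(be - al) * (2 * \<sigma> - 1/2) \<le> 0" using al_be by (intro mult_nonneg_nonpos) auto
  then have "arg \<sigma> \<le> al" unfolding arg_def by simp
  then show ?thesis by (simp add: Sd_def UU_def V_zero)
qed

lemma St_high: assumes "n > 3" "\<sigma> \<ge> 3/4" shows "Sd n 0 \<sigma> = 1"
proof -
  have "(be - al) * 1 \<le> (be - al) * (2 * \<sigma> - 1/2)" using assms al_be by (intro mult_left_mono) auto
  then have "be \<le> arg \<sigma>" unfolding arg_def by simp
  then have "V n (arg \<sigma>) = V n be" by (rule V_const[OF assms(1)])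
  then show ?thesis using V_pos[OF assms(1)] by (simp add: Sd_def UU_def)
qed

lemma St_range: assumes "n > 3" shows "0 \<le> Sd n 0 \<sigma>" "Sd n 0 \<sigma> \<le> 1"
proof -
  have p: "V n be > 0" by (rule V_pos[OF assms])
  have "0 \<le> V n (arg \<sigma>)"
  proof (cases "arg \<sigma> \<le> al")
    case True then show ?thesis by (simp add: V_zero)
  next
    case False then show ?thesis using V_mono[OF assms, of al "arg \<sigma>"] V_zero[of al n] by simp
  qed
  moreover have "V n (arg \<sigma>) \<le> V n be"
  proof (cases "arg \<sigma> \<le> be")
    case True then show ?thesis using V_mono[OF assms True] by simp
  next
    case False
    then have "V n (arg \<sigma>) = V n be" by (intro V_const[OF assms]) auto
    then show ?thesis by simp
  qed
  moreover have e: "Sd n 0 \<sigma> = V n (arg \<sigma>) / V n be" by (simp add: Sd_def UU_def)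
  ultimately show "0 \<le> Sd n 0 \<sigma>" "Sd n 0 \<sigma> \<le> 1" using p unfolding e
    by (simp_all add: divide_le_eq_1)
qed



context
  fixes NN :: "int \<Rightarrow> nat" and \<phi> :: "real \<Rightarrow> real" and S0 :: "real \<Rightarrow> real"
  assumes NN_pos: "\<And>k. NN k \<ge> 1"
    and S0_low: "\<And>\<sigma>. \<sigma> \<le> 1/4 \<Longrightarrow> S0 \<sigma> = 0"
    and S0_high: "\<And>\<sigma>. \<sigma> \<ge> 3/4 \<Longrightarrow> S0 \<sigma> = 1"
begin

definition "kk (t::real) = \<lfloor>t\<rfloor>"
definition "Nr (t::real) = real (NN (kk t))"
definition "jj (t::real) = \<lfloor>Nr t * (t - kk t)\<rfloor>"
definition "lo (t::real) = kk t + jj t / Nr t"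
definition "hi (t::real) = kk t + (jj t + 1) / Nr t"
definition "sg (t::real) = Nr t * (t - kk t) - jj t"
definition "yy (t::real) = \<phi> (lo t) + (\<phi> (hi t) - \<phi> (lo t)) * S0 (sg t)"

lemma Nr_pos: "Nr t > 0" unfolding Nr_def using NN_pos[of "kk t"] by simp

lemma jj_bounds: "0 \<le> jj t" "jj t + 1 \<le> Nr t"
proof -
  have k: "kk t \<le> t" "t < kk t + 1" unfolding kk_def by linarith+
  have N: "Nr t > 0" by (rule Nr_pos)
  have a: "0 \<le> Nr t * (t - kk t)" using k N by simp
  have b: "Nr t * (t - kk t) < Nr t" using k N by simp
  show "0 \<le> jj t" unfolding jj_def using a by simp
  have "real_of_int (jj t) \<le> Nr t * (t - kk t)" unfolding jj_def by simp
  then have "real_of_int (jj t) < Nr t" using b by linarith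
  moreover have "Nr t = real_of_int (int (NN (kk t)))" unfolding Nr_def by simp
  ultimately have "jj t < int (NN (kk t))" by linarith
  then show "jj t + 1 \<le> Nr t" unfolding Nr_def by linarith
qed

lemma lo_hi: "kk t \<le> lo t" "lo t \<le> t" "t < hi t" "hi t \<le> kk t + 1" "hi t - lo t = 1 / Nr t"
  "t - lo t = sg t / Nr t" "0 \<le> sg t" "sg t < 1"
proof -
  have N: "Nr t > 0" by (rule Nr_pos)
  have j1: "real_of_int (jj t) \<le> Nr t * (t - kk t)" "Nr t * (t - kk t) < jj t + 1"
    unfolding jj_def by linarith+
  note jb = jj_bounds[of t]
  show "kk t \<le> lo t" unfolding lo_def using jb N by simp
  show "lo t \<le> t" unfolding lo_def using j1 N by (simp add: field_simps)
  show "t < hi t" unfolding hi_def using j1 N by (simp add: field_simps)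
  show "hi t \<le> kk t + 1" unfolding hi_def using jb N by (simp add: field_simps)
  show "hi t - lo t = 1 / Nr t" unfolding hi_def lo_def using N by (simp add: field_simps)
  show "t - lo t = sg t / Nr t" unfolding sg_def lo_def using N by (simp add: field_simps)
  show "0 \<le> sg t" "sg t < 1" unfolding sg_def using j1 by auto
qed

lemma cell_char:
  assumes "real_of_int k \<le> x" "x < real_of_int k + 1" "real_of_int j \<le> real (NN k) * (x - real_of_int k)"
    "real (NN k) * (x - real_of_int k) < real_of_int j + 1"
  shows "kk x = k" "jj x = j" "Nr x = real (NN k)" "lo x = real_of_int k + real_of_int j / real (NN k)"
    "hi x = real_of_int k + (real_of_int j + 1) / real (NN k)"
    "sg x = real (NN k) * (x - real_of_int k) - real_of_int j"
proof -
  show k: "kk x = k" unfolding kk_def using assms(1,2) by (simp add: floor_eq_iff)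
  show N: "Nr x = real (NN k)" unfolding Nr_def k by simp
  show j: "jj x = j" unfolding jj_def k N using assms(3,4) by (simp add: floor_eq_iff)
  show "lo x = real_of_int k + real_of_int j / real (NN k)" unfolding lo_def k N j by simp
  show "hi x = real_of_int k + (real_of_int j + 1) / real (NN k)" unfolding hi_def k N j by simp
  show "sg x = real (NN k) * (x - real_of_int k) - real_of_int j" unfolding sg_def k N j by simp
qed

lemma local_rep: fixes t :: real shows "\<exists>Q A B C E. open Q \<and> t \<in> Q \<and> (\<forall>x\<in>Q. yy x = A + B * S0 (C*x + E))"
proof (cases "sg t > 0")
  case True
  define k where "k = kk t"
  define j where "j = jj t"
  define N where "N = real (NN k)"
  have N0: "N > 0" using Nr_pos[of t] unfolding N_def k_def Nr_def by simp
  note lh = lo_hi[of t]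
  have lo: "lo t = k + j / N" unfolding lo_def k_def j_def N_def Nr_def ..
  have hi: "hi t = k + (j+1) / N" unfolding hi_def k_def j_def N_def Nr_def ..
  have "sg t / Nr t > 0" using True Nr_pos[of t] by simp
  then have lt: "lo t < t" using lh(6) by linarith
  have jb: "0 \<le> j" "j + 1 \<le> N" using jj_bounds[of t] unfolding j_def N_def k_def Nr_def by auto
  show ?thesis
  proof (intro exI conjI ballI)
    show "open {lo t<..<hi t}" by simp
    show "t \<in> {lo t<..<hi t}" using lt lh(3) by simp
    fix x assume x: "x \<in> {lo t<..<hi t}"
    have x1: "real_of_int k + real_of_int j / N < x" "x < real_of_int k + (real_of_int j + 1)/N" using x lo hi by auto
    have "real_of_int j / N \<ge> 0" using jb N0 by simp
    then have c1: "real_of_int k \<le> x" using x1(1) by linarith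
    have "(real_of_int j + 1)/N \<le> 1" using jb N0 by simp
    then have c2: "x < real_of_int k + 1" using x1(2) by linarith
    have c3: "real_of_int j \<le> N * (x - k)" using x1(1) N0 by (simp add: field_simps)
    have c4: "N * (x - k) < real_of_int j + 1" using x1(2) N0 by (simp add: field_simps)
    note cc = cell_char[OF c1 c2 c3[unfolded N_def] c4[unfolded N_def]]
    show "yy x = \<phi> (lo t) + (\<phi> (hi t) - \<phi> (lo t)) * S0 (N * x + (- N * k - j))"
      unfolding yy_def cc lo hi N_def by (simp add: algebra_simps)
  qed
next
  case False
  then have s0: "sg t = 0" using lo_hi(7)[of t] by simp
  have tl: "t = lo t" using lo_hi(6)[of t] s0 by simp
  define k where "k = kk t"
  define j where "j = jj t"
  define N where "N = real (NN k)"
  define Np where "Np = real (NN (k - 1))"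
  have N0: "N > 0" using Nr_pos[of t] unfolding N_def k_def Nr_def by simp
  have Np0: "Np \<ge> 1" using NN_pos[of "k-1"] unfolding Np_def by simp
  have N1: "N \<ge> 1" using NN_pos[of k] unfolding N_def by simp
  have jb: "0 \<le> j" "j + 1 \<le> N" using jj_bounds[of t] unfolding j_def N_def k_def Nr_def by auto
  have tk: "t = k + j / N" using tl unfolding lo_def k_def j_def N_def Nr_def by simp
  define d where "d = min (1 / (4 * N)) (1 / (4 * Np))"
  have d0: "d > 0" unfolding d_def using N0 Np0 by simp
  show ?thesis
  proof (intro exI conjI ballI)
    show "open {t - d<..<t + d}" by simp
    show "t \<in> {t - d<..<t + d}" using d0 by simp
    fix x assume x: "x \<in> {t - d<..<t + d}"
    have dN: "d \<le> 1 / (4 * N)" "d \<le> 1 / (4 * Np)" unfolding d_def by auto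
    show "yy x = \<phi> t + 0 * S0 (0 * x + 0)"
    proof (cases "t \<le> x")
      case True
      have x1: "x < k + j / N + 1 / (4 * N)" using x dN tk by simp
      have "real_of_int j / N \<ge> 0" using jb N0 by simp
      then have c1: "real_of_int k \<le> x" using True tk by linarith
      have "real_of_int j / N + 1 / (4 * N) < 1" using jb N0 by (simp add: field_simps)
      then have c2: "x < real_of_int k + 1" using x1 by simp
      have c3: "real_of_int j \<le> N * (x - k)" using True tk N0 by (simp add: field_simps)
      have c4': "N * (x - k) < j + 1/4" using x1 N0 by (simp add: field_simps)
      then have c4: "N * (x - k) < real_of_int j + 1" by simp
      note cc = cell_char[OF c1 c2 c3[unfolded N_def] c4[unfolded N_def]]
      have "sg x \<le> 1/4" using c4' cc(6) unfolding N_def by simp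
      then show ?thesis unfolding yy_def using S0_low cc(4) tk N_def by simp
    next
      case False
      show ?thesis
      proof (cases "j \<ge> 1")
        case True
        have x1: "k + j / N - 1 / (4 * N) < x" using x dN tk by simp
        have "0 \<le> j / N - 1 / (4 * N)" using True N0 by (simp add: field_simps)
        then have c1: "real_of_int k \<le> x" using x1 by simp
        have "real_of_int j / N \<le> 1" using jb N0 by simp
        then have c2: "x < real_of_int k + 1" using False tk by linarith
        have m: "N * (real_of_int k + real_of_int j / N - 1 / (4 * N)) < N * x"
          using mult_strict_left_mono[OF x1 N0] by simp
        have m2: "N * (real_of_int k + real_of_int j / N - 1 / (4 * N)) = N * k + j - 1/4"
          using N0 by (simp add: field_simps)
        have m3: "N * (x - k) = N * x - N * k" by (simp add: algebra_simps)
        have c3': "real_of_int (j - 1) + 3/4 < N * (x - k)" using m m2 m3 by simp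
        then have c3: "real_of_int (j - 1) \<le> N * (x - k)" by simp
        have c4: "N * (x - k) < real_of_int (j - 1) + 1" using False tk N0 by (simp add: field_simps)
        note cc = cell_char[OF c1 c2 c3[unfolded N_def] c4[unfolded N_def]]
        have "sg x \<ge> 3/4" using c3' cc(6) unfolding N_def by simp
        then show ?thesis unfolding yy_def using S0_high cc(5) tk N_def by simp
      next
        case False
        then have j0: "j = 0" using jb by simp
        then have tk': "t = k" using tk by simp
        have x1: "k - 1 / (4 * Np) < x" using x dN tk' by simp
        have "1 / (4 * Np) \<le> 1" using Np0 by simp
        then have c1: "real_of_int (k - 1) \<le> x" using x1 by simp
        have c2: "x < real_of_int (k - 1) + 1" using \<open>\<not> t \<le> x\<close> tk' by simp
        have c3': "real_of_int (int (NN (k - 1)) - 1) + 3/4 < Np * (x - (k - 1))"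
          using x1 Np0 unfolding Np_def by (simp add: field_simps)
        then have c3: "real_of_int (int (NN (k - 1)) - 1) \<le> real (NN (k - 1)) * (x - real_of_int (k - 1))"
          unfolding Np_def by simp
        have c4: "real (NN (k - 1)) * (x - real_of_int (k - 1)) < real_of_int (int (NN (k - 1)) - 1) + 1"
          using c2 Np0 unfolding Np_def by (simp add: field_simps)
        note cc = cell_char[OF c1 c2 c3 c4]
        have "sg x \<ge> 3/4" using c3' cc(6) unfolding Np_def by simp
        moreover have "hi x = k" using cc(5) Np0 unfolding Np_def by simp
        ultimately show ?thesis unfolding yy_def using S0_high tk' by simp
      qed
    qed
  qed
qed

lemma approx:
  fixes \<epsilon> :: "real \<Rightarrow> real"
  assumes NNp: "\<And>k t s. t \<in> {real_of_int k..real_of_int k + 1} \<Longrightarrow> s \<in> {real_of_int k..real_of_int k + 1}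
        \<Longrightarrow> \<bar>t - s\<bar> \<le> 1 / real (NN k) \<Longrightarrow> \<bar>\<phi> t - \<phi> s\<bar> < \<epsilon> t"
    and S0r: "\<And>\<sigma>. 0 \<le> S0 \<sigma> \<and> S0 \<sigma> \<le> 1"
  shows "\<bar>yy t - \<phi> t\<bar> < \<epsilon> t"
proof -
  note lh = lo_hi[of t]
  have k: "real_of_int (kk t) \<le> t" "t < real_of_int (kk t) + 1" unfolding kk_def by linarith+
  have d: "hi t - lo t = 1 / real (NN (kk t))" using lh(5) unfolding Nr_def .
  have A: "\<bar>\<phi> t - \<phi> (lo t)\<bar> < \<epsilon> t"
    by (rule NNp[of t "kk t"]) (use lh k d in auto)
  have B: "\<bar>\<phi> t - \<phi> (hi t)\<bar> < \<epsilon> t"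
    by (rule NNp[of t "kk t"]) (use lh k d in auto)
  define s where "s = S0 (sg t)"
  have s: "0 \<le> s" "s \<le> 1" using S0r s_def by auto
  have e: "yy t - \<phi> t = (1 - s) * (\<phi> (lo t) - \<phi> t) + s * (\<phi> (hi t) - \<phi> t)"
    unfolding yy_def s_def by (simp add: algebra_simps)
  have t1: "\<bar>(1 - s) * (\<phi> (lo t) - \<phi> t)\<bar> = (1 - s) * \<bar>\<phi> t - \<phi> (lo t)\<bar>"
    using s by (simp add: abs_mult abs_minus_commute)
  have t2: "\<bar>s * (\<phi> (hi t) - \<phi> t)\<bar> = s * \<bar>\<phi> t - \<phi> (hi t)\<bar>"
    using s by (simp add: abs_mult abs_minus_commute)
  have le1: "(1 - s) * \<bar>\<phi> t - \<phi> (lo t)\<bar> \<le> (1 - s) * \<epsilon> t"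
    using A s by (intro mult_left_mono) auto
  have le2: "s * \<bar>\<phi> t - \<phi> (hi t)\<bar> \<le> s * \<epsilon> t"
    using B s by (intro mult_left_mono) auto
  have "(1 - s) * \<bar>\<phi> t - \<phi> (lo t)\<bar> + s * \<bar>\<phi> t - \<phi> (hi t)\<bar> < \<epsilon> t"
  proof (cases "s < 1")
    case True
    have "(1 - s) * \<bar>\<phi> t - \<phi> (lo t)\<bar> < (1 - s) * \<epsilon> t"
      using A True by (intro mult_strict_left_mono) auto
    then show ?thesis using le2 by (simp add: algebra_simps)
  next
    case False
    then have "s = 1" using s by simp
    then show ?thesis using B by simp
  qed
  then show ?thesis unfolding e using t1 t2 abs_triangle_ineq[of "(1 - s) * (\<phi> (lo t) - \<phi> t)" "s * (\<phi> (hi t) - \<phi> t)"]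
    by linarith
qed

end


lemma exists_N:
  fixes \<phi> \<epsilon> :: "real \<Rightarrow> real"
  assumes cp: "continuous_on UNIV \<phi>" and ce: "continuous_on UNIV \<epsilon>" and ep: "\<forall>t. \<epsilon> t > 0"
  shows "\<exists>N::nat. N \<ge> 1 \<and> (\<forall>t s. t \<in> {a..a + 1} \<longrightarrow> s \<in> {a..a + 1} \<longrightarrow>
           \<bar>t - s\<bar> \<le> 1 / real N \<longrightarrow> \<bar>\<phi> t - \<phi> s\<bar> < \<epsilon> t)"
proof -
  define I where "I = {a..a+1}"
  have cI: "compact I" "I \<noteq> {}" unfolding I_def by auto
  obtain x0 where x0: "x0 \<in> I" "\<forall>y\<in>I. \<epsilon> x0 \<le> \<epsilon> y"
    using continuous_attains_inf[OF cI continuous_on_subset[OF ce]] by blast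
  define m where "m = \<epsilon> x0"
  have m0: "m > 0" using ep m_def by simp
  have "uniformly_continuous_on I \<phi>"
    by (rule compact_uniformly_continuous[OF continuous_on_subset[OF cp] cI(1)]) simp
  then have "\<exists>d>0. \<forall>x\<in>I. \<forall>x'\<in>I. dist x' x < d \<longrightarrow> dist (\<phi> x') (\<phi> x) < m"
    unfolding uniformly_continuous_on_def using m0 by blast
  then obtain d where d: "d > 0" "\<forall>x\<in>I. \<forall>x'\<in>I. dist x' x < d \<longrightarrow> dist (\<phi> x') (\<phi> x) < m"
    by blast
  obtain N' where N': "inverse (real (Suc N')) < d" using reals_Archimedean[OF d(1)] by blast
  show ?thesis
  proof (intro exI[of _ "Suc N'"] conjI allI impI)
    show "1 \<le> Suc N'" by simp
    fix t s assume t: "t \<in> {a..a+1}" and s: "s \<in> {a..a+1}" and ts: "\<bar>t - s\<bar> \<le> 1 / real (Suc N')"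
    have "dist s t < d" using ts N' by (simp add: dist_real_def abs_minus_commute inverse_eq_divide)
    then have "dist (\<phi> s) (\<phi> t) < m" using d(2) t s unfolding I_def by blast
    moreover have "m \<le> \<epsilon> t" using x0 t unfolding m_def I_def by blast
    ultimately show "\<bar>\<phi> t - \<phi> s\<bar> < \<epsilon> t" by (simp add: dist_real_def abs_minus_commute)
  qed
qed

theorem theorem4:
  fixes n :: real and \<phi> \<epsilon> :: "real \<Rightarrow> real"
  assumes "n > 3"
    and "continuous_on UNIV \<phi>"
    and "continuous_on UNIV \<epsilon>"
    and "\<forall>t. \<epsilon> t > 0"
  shows "\<exists>y :: real \<Rightarrow> real. C_k_on_R 4 y \<and>
           (\<forall>t. (deriv ^^ 4) y t * ((deriv ^^ 1) y t)^2
                 - 3 * (deriv ^^ 3) y t * (deriv ^^ 2) y t * (deriv ^^ 1) y t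
                 + 2 * (1 - 1 / n^2) * ((deriv ^^ 2) y t)^3 = 0) \<and>
           (\<forall>t. \<bar>y t - \<phi> t\<bar> < \<epsilon> t)"
proof -
  have "\<forall>k::int. \<exists>N::nat. N \<ge> 1 \<and> (\<forall>t s. t \<in> {real_of_int k..real_of_int k + 1} \<longrightarrow> s \<in> {real_of_int k..real_of_int k + 1} \<longrightarrow>
           \<bar>t - s\<bar> \<le> 1 / real N \<longrightarrow> \<bar>\<phi> t - \<phi> s\<bar> < \<epsilon> t)"
    by (intro allI exists_N[OF assms(2-4)])
  from choice[OF this] obtain NN :: "int \<Rightarrow> nat" where NNa: "\<forall>k. NN k \<ge> 1 \<and> (\<forall>t s. t \<in> {real_of_int k..real_of_int k + 1} \<longrightarrow> s \<in> {real_of_int k..real_of_int k + 1} \<longrightarrow>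
           \<bar>t - s\<bar> \<le> 1 / real (NN k) \<longrightarrow> \<bar>\<phi> t - \<phi> s\<bar> < \<epsilon> t)" by blast
  have NN1: "\<And>k. NN k \<ge> 1" using NNa by blast
  have NN2: "\<And>k t s. t \<in> {real_of_int k..real_of_int k + 1} \<Longrightarrow> s \<in> {real_of_int k..real_of_int k + 1} \<Longrightarrow>
           \<bar>t - s\<bar> \<le> 1 / real (NN k) \<Longrightarrow> \<bar>\<phi> t - \<phi> s\<bar> < \<epsilon> t"
    using NNa by blast
  have low: "\<And>\<sigma>. \<sigma> \<le> 1/4 \<Longrightarrow> Sd n 0 \<sigma> = 0" by (rule St_low)
  have high: "\<And>\<sigma>. \<sigma> \<ge> 3/4 \<Longrightarrow> Sd n 0 \<sigma> = 1" by (rule St_high[OF assms(1)])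
  have rng: "\<And>\<sigma>. 0 \<le> Sd n 0 \<sigma> \<and> Sd n 0 \<sigma> \<le> 1" using St_range[OF assms(1)] by simp
  define y where "y = yy NN \<phi> (Sd n 0)"
  have A: "C_k_on_R 4 y \<and> (\<forall>t. (deriv ^^ 4) y t * ((deriv ^^ 1) y t)^2
                 - 3 * (deriv ^^ 3) y t * (deriv ^^ 2) y t * (deriv ^^ 1) y t
                 + 2 * (1 - 1 / n^2) * ((deriv ^^ 2) y t)^3 = 0)"
  proof (rule assemble[where S="Sd n"])
    show "\<And>k \<sigma>. k < 4 \<Longrightarrow> (Sd n k has_real_derivative Sd n (Suc k) \<sigma>) (at \<sigma>)"
      by (rule Sd_deriv[OF assms(1)])
    show "\<And>\<sigma>. isCont (Sd n 4) \<sigma>" by (rule Sd4_cont[OF assms(1)])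
    show "\<And>\<sigma>. Sd n 4 \<sigma> * (Sd n 1 \<sigma>)^2 - 3 * Sd n 3 \<sigma> * Sd n 2 \<sigma> * Sd n 1 \<sigma> + 2 * (1 - 1 / n^2) * (Sd n 2 \<sigma>)^3 = 0"
      by (rule Sd_ode[OF assms(1)])
    show "\<And>t. \<exists>Q A B C E. open Q \<and> t \<in> Q \<and> (\<forall>x\<in>Q. y x = A + B * Sd n 0 (C*x + E))"
      unfolding y_def by (rule local_rep[OF NN1 low high])
  qed
  have B: "\<forall>t. \<bar>y t - \<phi> t\<bar> < \<epsilon> t"
    unfolding y_def by (intro allI approx[OF NN1 low high NN2 rng])
  show ?thesis using A B by blast
qed


end
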